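(* Let $N\ge 2$, let $\rho$ be a density matrix on $\mathbb{C}^N$ and let $|\psi\rangle\in\mathbb{C}^N$ be a unit vector. Then, computing $\mathcal{C}$ on the $N^2$-dimensional space $\mathbb{C}^N\otimes\mathbb{C}^N$, $$\mathcal{C}(\rho\otimes|\psi\rangle\langle\psi|)\le \frac{S(\rho)}{2\log_2 N}\left(D(\rho,\mathcal{I})+\frac{N-1}{N}\right).$$
   Context: For a density matrix $\rho$ (positive semidefinite, trace one) on an $N$-dimensional Hilbert space, $\mathcal{I}=\mathbb{I}/N$ is the normalized maximally mixed state. The von Neumann entropy is $S(\rho)=-\mathrm{Tr}[\rho\log_2\rho]$, and $D(\rho,\sigma)=\tfrac12\|\rho-\sigma\|_1$ is the trace distance. The Quantum Statistical Complexity Measure is $\mathcal{C}(\rho)=\frac{1}{\log_2 M}\,S(\rho)\,D(\rho,\mathbb{I}/M)$ for a state on an $M$-dimensional space. *)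

theory Defs
  imports "Jordan_Normal_Form.Schur_Decomposition" "Jordan_Normal_Form.Char_Poly"
begin

definition hermitian_mat :: "complex mat \<Rightarrow> bool" where
  "hermitian_mat A \<longleftrightarrow> dim_row A = dim_col A \<and> mat_adjoint A = A"

definition psd_mat :: "complex mat \<Rightarrow> bool" where
  "psd_mat A \<longleftrightarrow> hermitian_mat A \<and>
     (\<forall>v \<in> carrier_vec (dim_row A). 0 \<le> Re ((A *\<^sub>v v) \<bullet>c v))"

definition mat_trace :: "complex mat \<Rightarrow> complex" where
  "mat_trace A = (\<Sum>i<dim_row A. A $$ (i, i))"

definition density_mat :: "nat \<Rightarrow> complex mat \<Rightarrow> bool" where
  "density_mat N \<rho> \<longleftrightarrow> \<rho> \<in> carrier_mat N N \<and> psd_mat \<rho> \<and> mat_trace \<rho> = 1"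

definition eigvals :: "complex mat \<Rightarrow> complex multiset" where
  "eigvals A = proots (char_poly A)"

(* von Neumann entropy S(rho) = -Tr[rho log2 rho], via spectral decomposition *)
definition vn_entropy :: "complex mat \<Rightarrow> real" where
  "vn_entropy \<rho> = - (\<Sum>l\<in>#eigvals \<rho>. (if Re l = 0 then 0 else Re l * log 2 (Re l)))"

(* trace norm ||A||_1 = Tr sqrt(A^dagger A) = sum of singular values *)
definition trace_norm :: "complex mat \<Rightarrow> real" where
  "trace_norm A = (\<Sum>m\<in>#eigvals (mat_adjoint A * A). sqrt (Re m))"

definition trace_dist :: "complex mat \<Rightarrow> complex mat \<Rightarrow> real" where
  "trace_dist \<rho> \<sigma> = trace_norm (\<rho> - \<sigma>) / 2"

definition max_mixed :: "nat \<Rightarrow> complex mat" where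
  "max_mixed M = (1 / of_nat M) \<cdot>\<^sub>m 1\<^sub>m M"

definition qscm :: "complex mat \<Rightarrow> real" where
  "qscm \<rho> = (let M = dim_row \<rho> in
      (1 / log 2 (real M)) * vn_entropy \<rho> * trace_dist \<rho> (max_mixed M))"

definition kron :: "complex mat \<Rightarrow> complex mat \<Rightarrow> complex mat" where
  "kron A B = mat (dim_row A * dim_row B) (dim_col A * dim_col B)
     (\<lambda>(i, j). A $$ (i div dim_row B, j div dim_col B) * B $$ (i mod dim_row B, j mod dim_col B))"

definition ket_bra :: "complex vec \<Rightarrow> complex mat" where
  "ket_bra \<psi> = mat (dim_vec \<psi>) (dim_vec \<psi>) (\<lambda>(i, j). \<psi> $ i * cnj (\<psi> $ j))"

definition is_unit_vec :: "complex vec \<Rightarrow> bool" where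
  "is_unit_vec \<psi> \<longleftrightarrow> (\<Sum>i<dim_vec \<psi>. (cmod (\<psi> $ i))^2) = 1"

end

theory Submission
  imports Defs
begin


abbreviation adj :: "complex mat \<Rightarrow> complex mat" where "adj \<equiv> mat_adjoint"

lemma adj_dim[simp]: "dim_row (adj A) = dim_col A" "dim_col (adj A) = dim_row A"
  by (auto simp: mat_adjoint_def)

lemma adj_index[simp]: "i < dim_col A \<Longrightarrow> j < dim_row A \<Longrightarrow> adj A $$ (i,j) = cnj (A $$ (j,i))"
  by (auto simp: mat_adjoint_def mat_of_rows_index conjugate_vec_def)

lemma adj_carrier[simp]: "A \<in> carrier_mat n m \<Longrightarrow> adj A \<in> carrier_mat m n"
proof -
  assume "A \<in> carrier_mat n m"
  then show ?thesis by (intro carrier_matI) (auto dest: carrier_matD)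
qed

lemma adj_adj[simp]: "adj (adj A) = A"
  by (rule eq_matI, auto)

lemma adj_one[simp]: "adj (1\<^sub>m n) = 1\<^sub>m n"
  by (rule eq_matI, auto)

lemma adj_mult: assumes A: "A \<in> carrier_mat n m" and B: "B \<in> carrier_mat m k"
  shows "adj (A * B) = adj B * adj A"
proof (rule eq_matI)
  fix i j assume "i < dim_row (adj B * adj A)" "j < dim_col (adj B * adj A)"
  hence i: "i < k" and j: "j < n" using A B by auto
  have "adj (A * B) $$ (i,j) = cnj (\<Sum>l<m. A $$ (j,l) * B $$ (l,i))"
    using A B i j by (simp add: scalar_prod_def lessThan_atLeast0)
  also have "\<dots> = (\<Sum>l<m. cnj (B $$ (l,i)) * cnj (A $$ (j,l)))"
    by (simp add: mult.commute)
  also have "\<dots> = (adj B * adj A) $$ (i,j)"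
    using A B i j by (simp add: scalar_prod_def lessThan_atLeast0)
  finally show "adj (A * B) $$ (i,j) = (adj B * adj A) $$ (i,j)" .
qed (insert A B, auto)

lemma adj_minus: assumes "A \<in> carrier_mat n m" "B \<in> carrier_mat n m"
  shows "adj (A - B) = adj A - adj B"
  by (rule eq_matI, insert assms, auto)

lemma adj_smult: "adj (c \<cdot>\<^sub>m A) = cnj c \<cdot>\<^sub>m adj A"
  by (rule eq_matI, auto)

definition unitary :: "nat \<Rightarrow> complex mat \<Rightarrow> bool" where
  "unitary n U \<longleftrightarrow> U \<in> carrier_mat n n \<and> adj U * U = 1\<^sub>m n"

lemma unitary_right: "unitary n U \<Longrightarrow> U * adj U = 1\<^sub>m n"
  unfolding unitary_def by (metis adj_carrier mat_mult_left_right_inverse)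

lemma unitary_carrier: "unitary n U \<Longrightarrow> U \<in> carrier_mat n n"
  unfolding unitary_def by auto

lemma unitary_mult: assumes "unitary n U" "unitary n V" shows "unitary n (U * V)"
proof -
  have U: "U \<in> carrier_mat n n" and V: "V \<in> carrier_mat n n" using assms unitary_def by auto
  have "adj (U * V) * (U * V) = adj V * ((adj U * U) * V)"
    using U V by (simp add: adj_mult assoc_mult_mat[of _ n n _ n _ n])
  also have "\<dots> = 1\<^sub>m n" using assms U V unfolding unitary_def by simp
  finally show ?thesis using U V unfolding unitary_def by auto
qed

definition dmat :: "nat \<Rightarrow> (nat \<Rightarrow> complex) \<Rightarrow> complex mat" where
  "dmat n f = mat n n (\<lambda>(i,j). if i = j then f i else 0)"

lemma dmat_carrier[simp]: "dmat n f \<in> carrier_mat n n"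
  and dmat_dim[simp]: "dim_row (dmat n f) = n" "dim_col (dmat n f) = n"
  and dmat_index[simp]: "i < n \<Longrightarrow> j < n \<Longrightarrow> dmat n f $$ (i,j) = (if i = j then f i else 0)"
  by (auto simp: dmat_def)

lemma udv_index: assumes U: "U \<in> carrier_mat n n" and V: "V \<in> carrier_mat n n"
  and i: "i < n" and j: "j < n"
  shows "(U * dmat n f * V) $$ (i,j) = (\<Sum>k<n. U $$ (i,k) * f k * V $$ (k,j))"
proof -
  have "(U * dmat n f * V) $$ (i,j) = (\<Sum>k<n. (U * dmat n f) $$ (i,k) * V $$ (k,j))"
    using U V i j by (auto simp: scalar_prod_def row_def col_def lessThan_atLeast0)
  also have "\<dots> = (\<Sum>k<n. U $$ (i,k) * f k * V $$ (k,j))"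
  proof (rule sum.cong[OF refl])
    fix k assume k: "k \<in> {..<n}"
    have "(U * dmat n f) $$ (i,k) = (\<Sum>l<n. U $$ (i,l) * (if l = k then f l else 0))"
      using U i k by (auto simp: scalar_prod_def row_def col_def lessThan_atLeast0 intro!: sum.cong)
    also have "\<dots> = U $$ (i,k) * f k" using k
      by (simp add: if_distrib[of "\<lambda>x. U $$ (i,_) * x"] sum.delta' cong: if_cong)
    finally show "(U * dmat n f) $$ (i,k) * V $$ (k,j) = U $$ (i,k) * f k * V $$ (k,j)" by simp
  qed
  finally show ?thesis .
qed

lemma proots_linear_prod: "proots (\<Prod>a\<leftarrow>as. [:- a, 1:]) = mset (as :: complex list)"
proof (induction as)
  case Nil then show ?case by simp
next
  case (Cons a as)
  have "proots (\<Prod>a\<leftarrow>a # as. [:- a, 1:]) = proots ([:- a, 1:] * (\<Prod>a\<leftarrow>as. [:- a, 1:]))"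
    by (simp only: list.map prod_list.Cons)
  also have "\<dots> = proots [:- a, 1:] + proots (\<Prod>a\<leftarrow>as. [:- a, 1:])"
    by (rule proots_mult) (auto simp: prod_list_zero_iff)
  also have "proots [:- a, 1:] = {#a#}" using proots_linear_factor[of "-a"] by simp
  finally show ?case using Cons by simp
qed

lemma eigvals_udu: assumes U: "unitary n U"
  shows "eigvals (U * dmat n f * adj U) = mset (map f [0..<n])"
proof -
  have Uc: "U \<in> carrier_mat n n" using U unitary_carrier by auto
  have sim: "similar_mat (U * dmat n f * adj U) (dmat n f)"
    unfolding similar_mat_def similar_mat_wit_def Let_def
    by (rule exI[of _ U], rule exI[of _ "adj U"], insert U Uc unitary_right[OF U],
        auto simp: unitary_def)
  have ut: "upper_triangular (dmat n f)" by (auto simp: upper_triangular_def)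
  have "char_poly (U * dmat n f * adj U) = char_poly (dmat n f)" by (rule char_poly_similar[OF sim])
  also have "\<dots> = (\<Prod>a\<leftarrow>diag_mat (dmat n f). [:- a, 1:])"
    by (rule char_poly_upper_triangular[OF dmat_carrier ut])
  also have "diag_mat (dmat n f) = map f [0..<n]" by (auto simp: diag_mat_def)
  finally have cp: "char_poly (U * dmat n f * adj U) = (\<Prod>a\<leftarrow>map f [0..<n]. [:- a, 1:])" .
  show ?thesis by (simp only: eigvals_def cp proots_linear_prod)
qed



lemma cscalar_self: fixes w :: "complex vec"
  shows "Im (w \<bullet>c w) = 0" "Re (w \<bullet>c w) \<ge> 0"
  using conjugate_square_ge_0_vec[of w] by (auto simp: less_eq_complex_def)

lemma orthonormal_extend: fixes v :: "complex vec"
  assumes v: "v \<in> carrier_vec n" and v0: "v \<noteq> 0\<^sub>v n"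
  shows "\<exists>W c. unitary n W \<and> c \<noteq> 0 \<and> col W 0 = c \<cdot>\<^sub>v v"
proof -
  interpret cof_vec_space n "TYPE(complex)" .
  define b where "b = basis_completion v"
  from basis_completion[OF v v0, folded b_def]
  have dist_b: "distinct b" and indep: "\<not> lin_dep (set b)" and bc: "set b \<subseteq> carrier_vec n"
    and hdb: "hd b = v" and len_b: "length b = n" by auto
  have n: "n > 0" using v v0 by (cases n) auto
  from hdb len_b n obtain vs where bv: "b = v # vs" by (cases b, auto)
  define ws where "ws = gram_schmidt n b"
  from gram_schmidt_result[OF bc dist_b indep refl, folded ws_def]
  have wsc: "set ws \<subseteq> carrier_vec n" and orth: "corthogonal ws" and len: "length ws = n"
    by (auto simp: len_b)
  from gram_schmidt_hd[OF v, of vs, folded bv] have hdws: "hd ws = v" unfolding ws_def .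
  define nr where "nr = (\<lambda>w :: complex vec. complex_of_real (sqrt (Re (w \<bullet>c w))))"
  define us where "us = map (\<lambda>w. (1 / nr w) \<cdot>\<^sub>v w) ws"
  define W where "W = mat_of_cols n us"
  have lus: "length us = n" using len by (simp add: us_def)
  have usi: "us ! i = (1 / nr (ws ! i)) \<cdot>\<^sub>v ws ! i" if "i < n" for i using that len by (simp add: us_def)
  have wsi: "ws ! i \<in> carrier_vec n" if "i < n" for i using that len wsc by auto
  have usc: "us ! i \<in> carrier_vec n" if "i < n" for i using that usi wsi by auto
  have Wc: "W \<in> carrier_mat n n" using mat_of_cols_carrier(1)[of n us] lus by (simp add: W_def)
  have Wij: "W $$ (l, i) = ws ! i $ l / nr (ws ! i)" if "l < n" "i < n" for l i
  proof -
    have "dim_vec (ws ! i) = n" using wsi[OF that(2)] by auto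
    then show ?thesis using that lus usi by (simp add: W_def mat_of_cols_index)
  qed
  have nz: "ws ! i \<bullet>c ws ! i \<noteq> 0" if "i < n" for i
    using corthogonalD[OF orth, of i i] that len by auto
  have re_pos: "Re (ws ! i \<bullet>c ws ! i) > 0" if "i < n" for i
    using nz[OF that] cscalar_self[of "ws ! i"] by (metis complex_eq_iff less_eq_real_def zero_complex.sel)
  have adjW: "adj W * W = 1\<^sub>m n"
  proof (rule eq_matI)
    fix i j assume "i < dim_row (1\<^sub>m n)" "j < dim_col (1\<^sub>m n)"
    hence i: "i < n" and j: "j < n" by auto
    have "(adj W * W) $$ (i,j) = (\<Sum>l<n. cnj (W $$ (l,i)) * W $$ (l,j))"
      using Wc i j by (simp add: scalar_prod_def lessThan_atLeast0)
    also have "\<dots> = (\<Sum>l<n. (ws ! j $ l * cnj (ws ! i $ l)) / (nr (ws ! i) * nr (ws ! j)))"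
      using i j by (intro sum.cong refl, simp add: Wij nr_def)
    also have "\<dots> = (ws ! j \<bullet>c ws ! i) / (nr (ws ! i) * nr (ws ! j))"
      using wsi[OF i] wsi[OF j]
      by (simp add: scalar_prod_def sum_divide_distrib lessThan_atLeast0 conjugate_vec_def)
    also have "\<dots> = 1\<^sub>m n $$ (i,j)"
    proof (cases "i = j")
      case True
      have "nr (ws ! i) * nr (ws ! i) = complex_of_real (Re (ws ! i \<bullet>c ws ! i))"
        using re_pos[OF i] unfolding nr_def by (simp flip: of_real_mult)
      also have "\<dots> = ws ! i \<bullet>c ws ! i" using cscalar_self[of "ws ! i"] by (simp add: complex_eq_iff)
      finally show ?thesis using True i nz[OF i] by simp
    next
      case False
      then show ?thesis using corthogonalD[OF orth, of j i] i j len by auto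
    qed
    finally show "(adj W * W) $$ (i,j) = 1\<^sub>m n $$ (i,j)" .
  qed (insert Wc, auto)
  have col0: "col W 0 = (1 / nr v) \<cdot>\<^sub>v v"
    using n lus usi[of 0] hdws len usc[of 0] unfolding W_def
    by (metis col_mat_of_cols hd_conv_nth list.size(3) not_gr0)
  have "nr v \<noteq> 0"
  proof -
    have "v = ws ! 0" using hdws len n by (metis hd_conv_nth list.size(3) not_gr0)
    then show ?thesis using re_pos[OF n] unfolding nr_def by auto
  qed
  then show ?thesis using adjW Wc col0 unfolding unitary_def
    by (intro exI[of _ W] exI[of _ "1 / nr v"]) auto
qed



lemma mult_sq: "A \<in> carrier_mat n n \<Longrightarrow> B \<in> carrier_mat n n \<Longrightarrow> A * B \<in> carrier_mat n n"
  by (rule mult_carrier_mat)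

lemma assoc_sq: "A \<in> carrier_mat n n \<Longrightarrow> B \<in> carrier_mat n n \<Longrightarrow> C \<in> carrier_mat n n \<Longrightarrow> A * B * C = A * (B * C)"
  by (rule assoc_mult_mat)

lemma unitary_schur: fixes A :: "complex mat"
  assumes "A \<in> carrier_mat n n"
  shows "\<exists>U B. unitary n U \<and> B \<in> carrier_mat n n \<and> upper_triangular B \<and> A = U * B * adj U"
  using assms
proof (induction n arbitrary: A)
  case 0
  have u: "unitary 0 (1\<^sub>m 0)" unfolding unitary_def by simp
  have ut: "upper_triangular A" using 0 by (auto simp: upper_triangular_def)
  have "A = 1\<^sub>m 0 * A * adj (1\<^sub>m 0)" using 0 by simp
  then show ?case using u ut 0 by blast
next
  case (Suc n A)
  note A = Suc.prems
  obtain as where cp: "char_poly A = (\<Prod>a\<leftarrow>as. [:- a, 1:])" and las: "length as = Suc n"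
    using char_poly_factorized[OF A] by blast
  then obtain e as' where as: "as = e # as'" by (cases as) auto
  have "poly (char_poly A) e = 0" unfolding cp as by simp
  hence ev: "eigenvalue A e" using eigenvalue_root_char_poly[OF A] by simp
  define v where "v = find_eigenvector A e"
  have "eigenvector A v e" unfolding v_def by (rule find_eigenvector[OF A ev])
  hence v: "v \<in> carrier_vec (Suc n)" and v0: "v \<noteq> 0\<^sub>v (Suc n)" and Av: "A *\<^sub>v v = e \<cdot>\<^sub>v v"
    using A unfolding eigenvector_def by auto
  obtain W c where W: "unitary (Suc n) W" and c0: "c \<noteq> 0" and colW: "col W 0 = c \<cdot>\<^sub>v v"
    using orthonormal_extend[OF v v0] by blast
  have Wc: "W \<in> carrier_mat (Suc n) (Suc n)" using W unitary_carrier by auto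
  have WW: "adj W * W = 1\<^sub>m (Suc n)" using W unfolding unitary_def by auto
  have WW': "W * adj W = 1\<^sub>m (Suc n)" using unitary_right[OF W] .
  define A' where "A' = adj W * A * W"
  have A'c: "A' \<in> carrier_mat (Suc n) (Suc n)" unfolding A'_def using Wc A by auto
  have AWcol: "col (A * W) 0 = e \<cdot>\<^sub>v col W 0"
  proof -
    have "col (A * W) 0 = A *\<^sub>v col W 0" using A Wc by (intro col_mult2) auto
    also have "\<dots> = c \<cdot>\<^sub>v (A *\<^sub>v v)" unfolding colW using mult_mat_vec[OF A v] .
    also have "\<dots> = e \<cdot>\<^sub>v col W 0" unfolding Av colW smult_smult_assoc by (simp add: mult.commute)
    finally show ?thesis .
  qed
  have A'0: "A' $$ (i, 0) = (if i = 0 then e else 0)" if i: "i < Suc n" for i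
  proof -
    have "A' = adj W * (A * W)" unfolding A'_def using Wc A
      by (intro assoc_mult_mat[of _ "Suc n" "Suc n" _ "Suc n" _ "Suc n"]) auto
    hence "A' $$ (i, 0) = (adj W * (A * W)) $$ (i, 0)" by simp
    also have "\<dots> = row (adj W) i \<bullet> col (A * W) 0" using i Wc A by simp
    also have "\<dots> = e * (row (adj W) i \<bullet> col W 0)" unfolding AWcol
      using Wc i colW v by (intro scalar_prod_smult_distrib[of _ "Suc n"]) auto
    also have "row (adj W) i \<bullet> col W 0 = (adj W * W) $$ (i, 0)" using Wc i by simp
    also have "\<dots> = (if i = 0 then 1 else 0)" unfolding WW using i by simp
    finally show ?thesis by simp
  qed
  obtain A1 A2 A0 A3 where splitA': "split_block A' 1 1 = (A1,A2,A0,A3)"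
    by (cases "split_block A' 1 1", auto)
  have dims: "dim_row A' = 1 + n" "dim_col A' = 1 + n" using A'c by auto
  from split_block[OF splitA' dims] have A1c: "A1 \<in> carrier_mat 1 1" and A2c: "A2 \<in> carrier_mat 1 n"
    and A0c: "A0 \<in> carrier_mat n 1" and A3c: "A3 \<in> carrier_mat n n"
    and A'b: "A' = four_block_mat A1 A2 A0 A3" by auto
  have A0id: "A0 = 0\<^sub>m n 1"
  proof (rule eq_matI)
    fix i j assume "i < dim_row (0\<^sub>m n 1)" "j < dim_col (0\<^sub>m n 1)"
    hence i: "i < n" and j: "j = 0" by auto
    have "A0 $$ (i, j) = A' $$ (i + 1, 0)" using splitA' i j dims unfolding split_block_def Let_def by auto
    also have "\<dots> = 0" using A'0[of "i+1"] i by simp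
    finally show "A0 $$ (i, j) = 0\<^sub>m n 1 $$ (i, j)" using i j by simp
  qed (insert A0c, auto)
  obtain U3 B3 where U3: "unitary n U3" and B3c: "B3 \<in> carrier_mat n n" and ut3: "upper_triangular B3"
    and A3eq: "A3 = U3 * B3 * adj U3" using Suc.IH[OF A3c] by blast
  have U3c: "U3 \<in> carrier_mat n n" using U3 unitary_carrier by auto
  have UU3: "adj U3 * U3 = 1\<^sub>m n" using U3 unfolding unitary_def by auto
  have UU3': "U3 * adj U3 = 1\<^sub>m n" using unitary_right[OF U3] .
  define D where "D = four_block_mat (1\<^sub>m 1) (0\<^sub>m 1 n) (0\<^sub>m n 1) U3"
  have Dc: "D \<in> carrier_mat (Suc n) (Suc n)" unfolding D_def using U3c
    using four_block_carrier_mat[of "1\<^sub>m 1" 1 1 U3 n n] by simp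
  have adjD: "adj D = four_block_mat (1\<^sub>m 1) (0\<^sub>m 1 n) (0\<^sub>m n 1) (adj U3)"
    unfolding D_def by (rule eq_matI, insert U3c, auto)
  have "adj D * D = four_block_mat (1\<^sub>m 1 * 1\<^sub>m 1 + 0\<^sub>m 1 n * 0\<^sub>m n 1) (1\<^sub>m 1 * 0\<^sub>m 1 n + 0\<^sub>m 1 n * U3)
     (0\<^sub>m n 1 * 1\<^sub>m 1 + adj U3 * 0\<^sub>m n 1) (0\<^sub>m n 1 * 0\<^sub>m 1 n + adj U3 * U3)"
    unfolding adjD by (unfold D_def, rule mult_four_block_mat, insert U3c, auto)
  also have "\<dots> = four_block_mat (1\<^sub>m 1) (0\<^sub>m 1 n) (0\<^sub>m n 1) (1\<^sub>m n)"
    unfolding UU3 using U3c by (intro cong_four_block_mat) auto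
  also have "\<dots> = 1\<^sub>m (Suc n)" by simp
  finally have DD: "adj D * D = 1\<^sub>m (Suc n)" .
  have Du: "unitary (Suc n) D" unfolding unitary_def using Dc DD by auto
  define B where "B = four_block_mat A1 (A2 * U3) (0\<^sub>m n 1) B3"
  have Bc: "B \<in> carrier_mat (Suc n) (Suc n)" unfolding B_def
    using four_block_carrier_mat[OF A1c B3c] by simp
  have utB: "upper_triangular B" unfolding B_def
    by (rule upper_triangular_four_block[OF A1c B3c _ ut3], insert A1c, auto simp: upper_triangular_def)
  have "D * B = four_block_mat (1\<^sub>m 1 * A1 + 0\<^sub>m 1 n * 0\<^sub>m n 1) (1\<^sub>m 1 * (A2 * U3) + 0\<^sub>m 1 n * B3)
     (0\<^sub>m n 1 * A1 + U3 * 0\<^sub>m n 1) (0\<^sub>m n 1 * (A2 * U3) + U3 * B3)"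
    unfolding B_def D_def by (rule mult_four_block_mat, insert U3c A1c A2c B3c, auto)
  also have "\<dots> = four_block_mat A1 (A2 * U3) (0\<^sub>m n 1) (U3 * B3)"
    using U3c A1c A2c B3c by (intro cong_four_block_mat) auto
  finally have DB: "D * B = four_block_mat A1 (A2 * U3) (0\<^sub>m n 1) (U3 * B3)" .
  have "D * B * adj D = four_block_mat (A1 * 1\<^sub>m 1 + (A2 * U3) * 0\<^sub>m n 1) (A1 * 0\<^sub>m 1 n + (A2 * U3) * adj U3)
     (0\<^sub>m n 1 * 1\<^sub>m 1 + (U3 * B3) * 0\<^sub>m n 1) (0\<^sub>m n 1 * 0\<^sub>m 1 n + (U3 * B3) * adj U3)"
    unfolding DB adjD by (rule mult_four_block_mat, insert U3c A1c A2c B3c, auto)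
  also have "\<dots> = four_block_mat A1 A2 A0 A3"
  proof (intro cong_four_block_mat)
    show "A1 * 1\<^sub>m 1 + (A2 * U3) * 0\<^sub>m n 1 = A1" using A1c A2c U3c by auto
    have "(A2 * U3) * adj U3 = A2 * (U3 * adj U3)" using A2c U3c by (intro assoc_mult_mat[of _ 1 n _ n _ n]) auto
    then show "A1 * 0\<^sub>m 1 n + (A2 * U3) * adj U3 = A2" unfolding UU3' using A1c A2c U3c by auto
    show "0\<^sub>m n 1 * 1\<^sub>m 1 + (U3 * B3) * 0\<^sub>m n 1 = A0" unfolding A0id using U3c B3c by auto
    show "0\<^sub>m n 1 * 0\<^sub>m 1 n + (U3 * B3) * adj U3 = A3" unfolding A3eq using U3c B3c by auto
  qed
  finally have A'eq: "A' = D * B * adj D" unfolding A'b by simp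
  have "A = (W * adj W) * A * (W * adj W)" unfolding WW' using A by simp
  also have "\<dots> = W * A' * adj W" unfolding A'_def using Wc A adj_carrier[OF Wc]
    by (simp add: assoc_sq[of _ "Suc n"] mult_sq[of _ "Suc n"])
  also have "\<dots> = (W * D) * B * adj (W * D)" unfolding A'eq using Wc Dc Bc adj_carrier[OF Wc] adj_carrier[OF Dc]
    by (simp add: adj_mult[OF Wc Dc] assoc_sq[of _ "Suc n"] mult_sq[of _ "Suc n"])
  finally have "A = (W * D) * B * adj (W * D)" .
  moreover have "unitary (Suc n) (W * D)" by (rule unitary_mult[OF W Du])
  ultimately show ?case using Bc utB by blast
qed



lemma ud_index: assumes U: "U \<in> carrier_mat n n" and i: "i < n" and k: "k < n"
  shows "(U * dmat n f) $$ (i,k) = U $$ (i,k) * f k"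
proof -
  have "(U * dmat n f) $$ (i,k) = (\<Sum>l<n. U $$ (i,l) * (if l = k then f l else 0))"
    using U i k by (auto simp: scalar_prod_def row_def col_def lessThan_atLeast0 intro!: sum.cong)
  also have "\<dots> = U $$ (i,k) * f k" using k
    by (simp add: if_distrib[of "\<lambda>x. U $$ (i,_) * x"] sum.delta' cong: if_cong)
  finally show ?thesis .
qed

lemma hermitian_decomp: fixes A :: "complex mat"
  assumes A: "A \<in> carrier_mat n n" and h: "adj A = A"
  shows "\<exists>U d. unitary n U \<and> A = U * dmat n (\<lambda>i. complex_of_real (d i)) * adj U"
proof -
  obtain U B where U: "unitary n U" and Bc: "B \<in> carrier_mat n n" and ut: "upper_triangular B"
    and AB: "A = U * B * adj U" using unitary_schur[OF A] by blast
  have Uc: "U \<in> carrier_mat n n" using U unitary_carrier by auto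
  have UU: "adj U * U = 1\<^sub>m n" using U unitary_def by auto
  have Ua: "adj U \<in> carrier_mat n n" using Uc by simp
  have "adj U * A * U = (adj U * U) * B * (adj U * U)" unfolding AB using Uc Bc Ua
    by (simp add: assoc_sq[of _ n] mult_sq[of _ n])
  also have "\<dots> = B" unfolding UU using Bc by simp
  finally have BA: "B = adj U * A * U" by simp
  have "adj B = adj U * adj A * adj (adj U)" unfolding BA using Uc A Ua
    by (simp add: adj_mult[of _ n n _ n] mult_sq[of _ n] assoc_sq[of _ n])
  hence hB: "adj B = B" unfolding h BA by simp
  have Bij: "B $$ (i,j) = (if i = j then complex_of_real (Re (B $$ (i,i))) else 0)"
    if i: "i < n" and j: "j < n" for i j
  proof -
    have e: "B $$ (i,j) = cnj (B $$ (j,i))" using hB i j Bc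
      by (metis adj_index carrier_matD(1) carrier_matD(2))
    show ?thesis
    proof (cases "i = j")
      case True
      then have "Im (B $$ (i,i)) = 0" using e by (metis cnj.sel(2) equal_neg_zero)
      then show ?thesis using True by (simp add: complex_eq_iff)
    next
      case False
      show ?thesis
      proof (cases "j < i")
        case True
        then show ?thesis using ut i Bc False by (auto simp: upper_triangular_def)
      next
        case f: False
        with False have "i < j" by simp
        then have "B $$ (j,i) = 0" using ut j Bc by (auto simp: upper_triangular_def)
        then show ?thesis using e False by simp
      qed
    qed
  qed
  have "B = dmat n (\<lambda>i. complex_of_real (Re (B $$ (i,i))))"
    by (rule eq_matI, insert Bc Bij, auto)
  then have "A = U * dmat n (\<lambda>i. complex_of_real (Re (B $$ (i,i)))) * adj U" using AB by simp
  then show ?thesis using U by (intro exI[of _ U] exI[of _ "\<lambda>i. Re (B $$ (i,i))"], simp)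
qed

definition udu :: "nat \<Rightarrow> complex mat \<Rightarrow> (nat \<Rightarrow> complex) \<Rightarrow> complex mat" where
  "udu n U f = U * dmat n f * adj U"

lemma udu_carrier: "U \<in> carrier_mat n n \<Longrightarrow> udu n U f \<in> carrier_mat n n"
  unfolding udu_def by (metis adj_carrier dmat_carrier mult_carrier_mat)

lemma udu_dim: "U \<in> carrier_mat n n \<Longrightarrow> dim_row (udu n U f) = n"  "U \<in> carrier_mat n n \<Longrightarrow> dim_col (udu n U f) = n"
  unfolding udu_def by auto

lemma udu_index: assumes U: "U \<in> carrier_mat n n" and i: "i < n" and j: "j < n"
  shows "udu n U f $$ (i,j) = (\<Sum>k<n. U $$ (i,k) * f k * cnj (U $$ (j,k)))"
proof -
  have dU: "dim_row U = n" "dim_col U = n" using U by auto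
  have "udu n U f $$ (i,j) = (\<Sum>k<n. U $$ (i,k) * f k * adj U $$ (k,j))"
    unfolding udu_def by (rule udv_index[OF U adj_carrier[OF U] i j])
  also have "\<dots> = (\<Sum>k<n. U $$ (i,k) * f k * cnj (U $$ (j,k)))"
    using dU j by (intro sum.cong refl) simp
  finally show ?thesis .
qed

lemma uu_index: assumes U: "unitary n U" and i: "i < n" and j: "j < n"
  shows "(\<Sum>k<n. U $$ (i,k) * cnj (U $$ (j,k))) = (if i = j then 1 else 0)"
proof -
  have Uc: "U \<in> carrier_mat n n" using U unitary_carrier by auto
  have "(\<Sum>k<n. U $$ (i,k) * cnj (U $$ (j,k))) = (U * adj U) $$ (i,j)"
    using Uc i j by (auto simp: scalar_prod_def lessThan_atLeast0 intro!: sum.cong)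
  also have "\<dots> = (if i = j then 1 else 0)" unfolding unitary_right[OF U] using i j by simp
  finally show ?thesis .
qed

lemma uu_index': assumes U: "unitary n U" and i: "i < n" and j: "j < n"
  shows "(\<Sum>k<n. cnj (U $$ (k,i)) * U $$ (k,j)) = (if i = j then 1 else 0)"
proof -
  have Uc: "U \<in> carrier_mat n n" using U unitary_carrier by auto
  have "(\<Sum>k<n. cnj (U $$ (k,i)) * U $$ (k,j)) = (adj U * U) $$ (i,j)"
    using Uc i j by (auto simp: scalar_prod_def lessThan_atLeast0 intro!: sum.cong)
  also have "\<dots> = (if i = j then 1 else 0)" using U i j unfolding unitary_def by simp
  finally show ?thesis .
qed

lemma udu_minus_const: assumes U: "unitary n U"
  shows "udu n U f - c \<cdot>\<^sub>m 1\<^sub>m n = udu n U (\<lambda>k. f k - c)"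
proof -
  have Uc: "U \<in> carrier_mat n n" using U unitary_carrier by auto
  show ?thesis
  proof (rule eq_matI)
    fix i j assume "i < dim_row (udu n U (\<lambda>k. f k - c))" "j < dim_col (udu n U (\<lambda>k. f k - c))"
    hence i: "i < n" and j: "j < n" using udu_dim[OF Uc] by auto
    have "udu n U (\<lambda>k. f k - c) $$ (i,j)
       = (\<Sum>k<n. U $$ (i,k) * f k * cnj (U $$ (j,k))) - c * (\<Sum>k<n. U $$ (i,k) * cnj (U $$ (j,k)))"
      unfolding udu_index[OF Uc i j]
      by (simp add: sum_subtractf sum_distrib_left algebra_simps)
    also have "\<dots> = (udu n U f - c \<cdot>\<^sub>m 1\<^sub>m n) $$ (i,j)"
      unfolding uu_index[OF U i j] using i j udu_carrier[OF Uc] udu_index[OF Uc i j] by simp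
    finally show "(udu n U f - c \<cdot>\<^sub>m 1\<^sub>m n) $$ (i,j) = udu n U (\<lambda>k. f k - c) $$ (i,j)" by simp
  qed (use udu_dim[OF Uc] in auto)
qed

lemma adj_udu: assumes Uc: "U \<in> carrier_mat n n"
  shows "adj (udu n U f) = udu n U (\<lambda>k. cnj (f k))"
proof (rule eq_matI)
  fix i j assume "i < dim_row (udu n U (\<lambda>k. cnj (f k)))" "j < dim_col (udu n U (\<lambda>k. cnj (f k)))"
  hence i: "i < n" and j: "j < n" using udu_dim[OF Uc] by auto
  show "adj (udu n U f) $$ (i,j) = udu n U (\<lambda>k. cnj (f k)) $$ (i,j)"
    using udu_carrier[OF Uc, of f] i j udu_index[OF Uc j i, of f] udu_index[OF Uc i j]
    by (auto simp: mult.commute mult.left_commute intro!: sum.cong)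
qed (use udu_dim[OF Uc] in auto)

lemma dmat_mult: "dmat n f * dmat n g = dmat n (\<lambda>k. f k * g k)"
proof (rule eq_matI)
  fix i j assume "i < dim_row (dmat n (\<lambda>k. f k * g k))" "j < dim_col (dmat n (\<lambda>k. f k * g k))"
  hence i: "i < n" and j: "j < n" by auto
  have "(dmat n f * dmat n g) $$ (i,j) = (dmat n f * dmat n g) $$ (i,j)" ..
  then show "(dmat n f * dmat n g) $$ (i,j) = dmat n (\<lambda>k. f k * g k) $$ (i,j)"
    using ud_index[OF dmat_carrier i j, of f g] i j by simp
qed auto

lemma udu_mult: assumes U: "unitary n U"
  shows "udu n U f * udu n U g = udu n U (\<lambda>k. f k * g k)"
proof -
  have Uc: "U \<in> carrier_mat n n" using U unitary_carrier by auto
  have Ua: "adj U \<in> carrier_mat n n" using Uc by simp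
  have UU: "adj U * U = 1\<^sub>m n" using U unitary_def by auto
  have D: "dmat n f \<in> carrier_mat n n" "dmat n g \<in> carrier_mat n n" by auto
  have "udu n U f * udu n U g = U * (dmat n f * ((adj U * U) * (dmat n g * adj U)))"
    unfolding udu_def using Uc Ua D by (simp add: assoc_sq[of _ n] mult_sq[of _ n])
  also have "\<dots> = U * (dmat n f * dmat n g) * adj U" unfolding UU using Uc Ua D
    by (simp add: assoc_sq[of _ n] mult_sq[of _ n])
  finally show ?thesis unfolding dmat_mult udu_def .
qed

lemma udu_recover: assumes U: "unitary n U"
  shows "adj U * udu n U f * U = dmat n f"
proof -
  have Uc: "U \<in> carrier_mat n n" using U unitary_carrier by auto
  have Ua: "adj U \<in> carrier_mat n n" using Uc by simp
  have UU: "adj U * U = 1\<^sub>m n" using U unitary_def by auto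
  have D: "dmat n f \<in> carrier_mat n n" by auto
  have "adj U * udu n U f * U = (adj U * U) * dmat n f * (adj U * U)"
    unfolding udu_def using Uc Ua D by (simp add: assoc_sq[of _ n] mult_sq[of _ n])
  then show ?thesis unfolding UU using D by simp
qed

lemma udu_inj: assumes U: "unitary n U" and e: "udu n U f = udu n U g" and k: "k < n"
  shows "f k = g k"
proof -
  have "dmat n f = dmat n g" using udu_recover[OF U, of f] udu_recover[OF U, of g] e by simp
  then have "dmat n f $$ (k,k) = dmat n g $$ (k,k)" by simp
  then show ?thesis using k by simp
qed

lemma sum_mset_upt: "(\<Sum>m\<in>#mset (map f [0..<n]). g m) = (\<Sum>k<n. g (f k))"
  by (induction n) (auto simp: add.commute)

lemma eigvals_udu': "unitary n U \<Longrightarrow> eigvals (udu n U f) = mset (map f [0..<n])"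
  unfolding udu_def by (rule eigvals_udu)

lemma trace_norm_udu: assumes U: "unitary n U"
  shows "trace_norm (udu n U f) = (\<Sum>k<n. cmod (f k))"
proof -
  have Uc: "U \<in> carrier_mat n n" using U unitary_carrier by auto
  have "adj (udu n U f) * udu n U f = udu n U (\<lambda>k. cnj (f k) * f k)"
    unfolding adj_udu[OF Uc] udu_mult[OF U] ..
  note e = this
  have "trace_norm (udu n U f) = (\<Sum>k<n. sqrt (Re (cnj (f k) * f k)))"
    unfolding trace_norm_def e eigvals_udu'[OF U] sum_mset_upt by simp
  also have "\<dots> = (\<Sum>k<n. cmod (f k))"
  proof (rule sum.cong[OF refl])
    fix k
    have "Re (cnj (f k) * f k) = (cmod (f k))^2"
      by (simp add: cmod_def power2_eq_square)
    then show "sqrt (Re (cnj (f k) * f k)) = cmod (f k)" by simp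
  qed
  finally show ?thesis .
qed

lemma trace_udu: assumes U: "unitary n U"
  shows "mat_trace (udu n U f) = (\<Sum>k<n. f k)"
proof -
  have Uc: "U \<in> carrier_mat n n" using U unitary_carrier by auto
  have "mat_trace (udu n U f) = (\<Sum>i<n. \<Sum>k<n. U $$ (i,k) * f k * cnj (U $$ (i,k)))"
    unfolding mat_trace_def using udu_carrier[OF Uc] udu_index[OF Uc] by (auto intro!: sum.cong)
  also have "\<dots> = (\<Sum>k<n. f k * (\<Sum>i<n. cnj (U $$ (i,k)) * U $$ (i,k)))"
    by (subst sum.swap) (simp add: sum_distrib_left algebra_simps)
  also have "\<dots> = (\<Sum>k<n. f k)" using uu_index'[OF U] by simp
  finally show ?thesis .
qed

lemma psd_udu: assumes U: "unitary n U" and p: "psd_mat (udu n U f)" and k: "k < n"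
  shows "Re (f k) \<ge> 0"
proof -
  have Uc: "U \<in> carrier_mat n n" using U unitary_carrier by auto
  define v where "v = col U k"
  have v: "v \<in> carrier_vec n" unfolding v_def using Uc by (metis carrier_matD(1) col_dim)
  have "udu n U f * U = U * dmat n f * (adj U * U)" unfolding udu_def using Uc
    by (simp add: assoc_sq[of _ n] mult_sq[of _ n])
  also have "\<dots> = U * dmat n f" using U Uc unfolding unitary_def by simp
  finally have e: "udu n U f * U = U * dmat n f" .
  have Av: "udu n U f *\<^sub>v v = col (U * dmat n f) k" unfolding v_def e[symmetric]
    using Uc udu_carrier[OF Uc] k by (intro col_mult2[symmetric]) auto
  have Avi: "(udu n U f *\<^sub>v v) $ i = U $$ (i,k) * f k" if i: "i < n" for i
  proof -
    have "(udu n U f *\<^sub>v v) $ i = (U * dmat n f) $$ (i,k)" unfolding Av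
      using i k Uc by (metis carrier_matD(1) dmat_dim(2) index_col index_mult_mat(2) index_mult_mat(3))
    also have "\<dots> = U $$ (i,k) * f k" by (rule ud_index[OF Uc i k])
    finally show ?thesis .
  qed
  have vi: "v $ i = U $$ (i,k)" if "i < n" for i unfolding v_def using that k Uc by auto
  have dv: "dim_vec v = n" using v by auto
  have "(udu n U f *\<^sub>v v) \<bullet>c v = (\<Sum>i<n. U $$ (i,k) * f k * cnj (U $$ (i,k)))"
    unfolding scalar_prod_def using dv Avi vi
    by (auto simp: lessThan_atLeast0 conjugate_vec_def intro!: sum.cong)
  also have "\<dots> = f k * (\<Sum>i<n. cnj (U $$ (i,k)) * U $$ (i,k))"
    by (simp add: sum_distrib_left algebra_simps)
  also have "\<dots> = f k" using uu_index'[OF U k k] by simp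
  finally have "(udu n U f *\<^sub>v v) \<bullet>c v = f k" .
  moreover have "dim_row (udu n U f) = n" using udu_carrier[OF Uc] by auto
  ultimately show ?thesis using p v unfolding psd_mat_def by auto
qed



lemma sum_split_nat: fixes n m :: nat shows "(\<Sum>k<n*m. g k) = (\<Sum>a<n. \<Sum>b<m. g (a*m+b))"
proof -
  have "(\<Sum>k<n*m. g k) = (\<Sum>a<n. sum g {a*m..<a*m+m})" using sum.nat_group[of g m n] by simp
  also have "\<dots> = (\<Sum>a<n. \<Sum>b<m. g (a*m+b))"
  proof (rule sum.cong[OF refl])
    fix a
    have "sum g {a*m..<a*m+m} = sum g {0+a*m..<m+a*m}" by (simp add: add.commute)
    also have "\<dots> = (\<Sum>b=0..<m. g (b + a*m))" by (rule sum.shift_bounds_nat_ivl)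
    finally show "sum g {a*m..<a*m+m} = (\<Sum>b<m. g (a*m+b))" by (simp add: lessThan_atLeast0 add.commute)
  qed
  finally show ?thesis .
qed

lemma dm_simps: "b < (m::nat) \<Longrightarrow> (a*m+b) div m = a" "b < m \<Longrightarrow> (a*m+b) mod m = b"
  by auto

lemma split_bound: "a < n \<Longrightarrow> b < (m::nat) \<Longrightarrow> a*m+b < n*m"
proof -
  assume a: "a < n" and b: "b < m"
  have "a*m+b < a*m+m" using b by simp
  also have "\<dots> = Suc a * m" by simp
  also have "\<dots> \<le> n * m" using a by (intro mult_right_mono) auto
  finally show ?thesis .
qed

lemma div_bound: "i < n*m \<Longrightarrow> i div m < (n::nat)"
  by (simp add: less_mult_imp_div_less)

lemma mod_bound: "i < n*m \<Longrightarrow> i mod m < (m::nat)"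
  by (metis mod_less_divisor mult_0_right neq0_conv not_less_zero)

lemma kron_dim: "dim_row (kron A B) = dim_row A * dim_row B" "dim_col (kron A B) = dim_col A * dim_col B"
  unfolding kron_def by auto

lemma kron_carrier: "A \<in> carrier_mat n n \<Longrightarrow> B \<in> carrier_mat m m \<Longrightarrow> kron A B \<in> carrier_mat (n*m) (n*m)"
  by (intro carrier_matI) (auto simp: kron_dim)

lemma kron_index: assumes A: "A \<in> carrier_mat n n" and B: "B \<in> carrier_mat m m"
  and i: "i < n*m" and j: "j < n*m"
  shows "kron A B $$ (i,j) = A $$ (i div m, j div m) * B $$ (i mod m, j mod m)"
  using A B i j unfolding kron_def by auto

lemma kron_mult: assumes A: "A \<in> carrier_mat n n" and B: "B \<in> carrier_mat n n"
  and C: "C \<in> carrier_mat m m" and D: "D \<in> carrier_mat m m"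
  shows "kron A C * kron B D = kron (A * B) (C * D)"
proof (rule eq_matI)
  fix i j assume "i < dim_row (kron (A * B) (C * D))" "j < dim_col (kron (A * B) (C * D))"
  hence i: "i < n*m" and j: "j < n*m" using A B C D by (auto simp: kron_dim)
  have AB: "A * B \<in> carrier_mat n n" and CD: "C * D \<in> carrier_mat m m" using A B C D by auto
  have "(kron A C * kron B D) $$ (i,j) = (\<Sum>k<n*m. kron A C $$ (i,k) * kron B D $$ (k,j))"
    using i j kron_carrier[OF A C] kron_carrier[OF B D]
    by (auto simp: scalar_prod_def lessThan_atLeast0 intro!: sum.cong)
  also have "\<dots> = (\<Sum>a<n. \<Sum>b<m. kron A C $$ (i,a*m+b) * kron B D $$ (a*m+b,j))"
    by (rule sum_split_nat)
  also have "\<dots> = (\<Sum>a<n. \<Sum>b<m. (A $$ (i div m, a) * B $$ (a, j div m)) * (C $$ (i mod m, b) * D $$ (b, j mod m)))"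
  proof (intro sum.cong refl)
    fix a b assume a: "a \<in> {..<n}" and b: "b \<in> {..<m}"
    have k: "a*m+b < n*m" using a b split_bound by auto
    have 1: "kron A C $$ (i,a*m+b) = A $$ (i div m, a) * C $$ (i mod m, b)"
      using kron_index[OF A C i k] dm_simps[of b m a] b by simp
    have 2: "kron B D $$ (a*m+b,j) = B $$ (a, j div m) * D $$ (b, j mod m)"
      using kron_index[OF B D k j] dm_simps[of b m a] b by simp
    show "kron A C $$ (i,a*m+b) * kron B D $$ (a*m+b,j) = (A $$ (i div m, a) * B $$ (a, j div m)) * (C $$ (i mod m, b) * D $$ (b, j mod m))"
      unfolding 1 2 by (simp add: ac_simps)
  qed
  also have "\<dots> = (\<Sum>a<n. A $$ (i div m, a) * B $$ (a, j div m)) * (\<Sum>b<m. C $$ (i mod m, b) * D $$ (b, j mod m))"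
    by (simp add: sum_product)
  also have "\<dots> = (A * B) $$ (i div m, j div m) * (C * D) $$ (i mod m, j mod m)"
    using A B C D div_bound[OF i] div_bound[OF j] mod_bound[OF i] mod_bound[OF j]
    by (simp add: scalar_prod_def lessThan_atLeast0)
  also have "\<dots> = kron (A * B) (C * D) $$ (i,j)" using kron_index[OF AB CD i j] by simp
  finally show "(kron A C * kron B D) $$ (i,j) = kron (A * B) (C * D) $$ (i,j)" .
qed (insert A B C D, auto simp: kron_dim)

lemma kron_adj: assumes A: "A \<in> carrier_mat n n" and C: "C \<in> carrier_mat m m"
  shows "adj (kron A C) = kron (adj A) (adj C)"
proof (rule eq_matI)
  fix i j assume "i < dim_row (kron (adj A) (adj C))" "j < dim_col (kron (adj A) (adj C))"
  hence i: "i < n*m" and j: "j < n*m" using A C by (auto simp: kron_dim)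
  show "adj (kron A C) $$ (i,j) = kron (adj A) (adj C) $$ (i,j)"
    using i j A C kron_carrier[OF A C] kron_index[OF A C j i] kron_index[OF adj_carrier[OF A] adj_carrier[OF C] i j]
      div_bound[OF i] div_bound[OF j] mod_bound[OF i] mod_bound[OF j]
    by simp
qed (insert A C, auto simp: kron_dim)

lemma nat_eq_div_mod: "(i::nat) = j \<longleftrightarrow> i div m = j div m \<and> i mod m = j mod m"
  by (metis div_mult_mod_eq)

lemma kron_dmat: "kron (dmat n f) (dmat m g) = dmat (n*m) (\<lambda>k. f (k div m) * g (k mod m))"
proof (rule eq_matI)
  fix i j assume "i < dim_row (dmat (n*m) (\<lambda>k. f (k div m) * g (k mod m)))"
    "j < dim_col (dmat (n*m) (\<lambda>k. f (k div m) * g (k mod m)))"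
  hence i: "i < n*m" and j: "j < n*m" by auto
  show "kron (dmat n f) (dmat m g) $$ (i,j) = dmat (n*m) (\<lambda>k. f (k div m) * g (k mod m)) $$ (i,j)"
    using kron_index[OF dmat_carrier dmat_carrier i j] i j
      div_bound[OF i] div_bound[OF j] mod_bound[OF i] mod_bound[OF j] nat_eq_div_mod[of i j m]
    by auto
qed (auto simp: kron_dim)

lemma one_dmat: "1\<^sub>m n = dmat n (\<lambda>_. 1)"
  by (rule eq_matI) auto

lemma unitary_kron: assumes U: "unitary n U" and V: "unitary m V"
  shows "unitary (n*m) (kron U V)"
proof -
  have Uc: "U \<in> carrier_mat n n" using U unitary_carrier by auto
  have Vc: "V \<in> carrier_mat m m" using V unitary_carrier by auto
  have "adj (kron U V) * kron U V = kron (adj U * U) (adj V * V)"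
    unfolding kron_adj[OF Uc Vc] by (rule kron_mult, insert Uc Vc, auto)
  also have "\<dots> = 1\<^sub>m (n*m)" using U V unfolding unitary_def by (simp add: one_dmat kron_dmat)
  finally show ?thesis unfolding unitary_def using kron_carrier[OF Uc Vc] by simp
qed

lemma kron_udu: assumes U: "unitary n U" and V: "unitary m V"
  shows "kron (udu n U f) (udu m V g) = udu (n*m) (kron U V) (\<lambda>k. f (k div m) * g (k mod m))"
proof -
  have Uc: "U \<in> carrier_mat n n" using U unitary_carrier by auto
  have Vc: "V \<in> carrier_mat m m" using V unitary_carrier by auto
  have "kron (udu n U f) (udu m V g) = kron (U * dmat n f) (V * dmat m g) * kron (adj U) (adj V)"
    unfolding udu_def by (rule kron_mult[symmetric], insert Uc Vc, auto)
  also have "kron (U * dmat n f) (V * dmat m g) = kron U V * kron (dmat n f) (dmat m g)"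
    by (rule kron_mult[symmetric], insert Uc Vc, auto)
  finally show ?thesis unfolding udu_def kron_dmat kron_adj[OF Uc Vc] .
qed

lemma ket_bra_carrier: "\<psi> \<in> carrier_vec N \<Longrightarrow> ket_bra \<psi> \<in> carrier_mat N N"
  unfolding ket_bra_def by (intro carrier_matI) auto

lemma ket_bra_index: "\<psi> \<in> carrier_vec N \<Longrightarrow> i < N \<Longrightarrow> j < N \<Longrightarrow> ket_bra \<psi> $$ (i,j) = \<psi> $ i * cnj (\<psi> $ j)"
  unfolding ket_bra_def by auto

lemma ket_bra_adj: assumes p: "\<psi> \<in> carrier_vec N" shows "adj (ket_bra \<psi>) = ket_bra \<psi>"
  by (rule eq_matI, insert p ket_bra_carrier[OF p], auto simp: ket_bra_index[OF p] mult.commute)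

lemma unit_sum: assumes p: "\<psi> \<in> carrier_vec N" and u: "is_unit_vec \<psi>"
  shows "(\<Sum>k<N. \<psi> $ k * cnj (\<psi> $ k)) = 1"
proof -
  have "(\<Sum>k<N. \<psi> $ k * cnj (\<psi> $ k)) = (\<Sum>k<N. complex_of_real ((cmod (\<psi> $ k))^2))"
    by (intro sum.cong refl) (metis complex_norm_square of_real_power)
  also have "\<dots> = complex_of_real (\<Sum>k<N. (cmod (\<psi> $ k))^2)" by simp
  also have "\<dots> = 1" using u p unfolding is_unit_vec_def by auto
  finally show ?thesis .
qed

lemma ket_bra_idem: assumes p: "\<psi> \<in> carrier_vec N" and u: "is_unit_vec \<psi>"
  shows "ket_bra \<psi> * ket_bra \<psi> = ket_bra \<psi>"
proof (rule eq_matI)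
  fix i j assume "i < dim_row (ket_bra \<psi>)" "j < dim_col (ket_bra \<psi>)"
  hence i: "i < N" and j: "j < N" using ket_bra_carrier[OF p] by auto
  have "(ket_bra \<psi> * ket_bra \<psi>) $$ (i,j) = (\<Sum>k<N. \<psi> $ i * cnj (\<psi> $ k) * (\<psi> $ k * cnj (\<psi> $ j)))"
    using i j ket_bra_carrier[OF p]
    by (auto simp: scalar_prod_def lessThan_atLeast0 ket_bra_index[OF p] intro!: sum.cong)
  also have "\<dots> = \<psi> $ i * cnj (\<psi> $ j) * (\<Sum>k<N. \<psi> $ k * cnj (\<psi> $ k))"
    by (simp add: sum_distrib_left algebra_simps)
  also have "\<dots> = ket_bra \<psi> $$ (i,j)" using unit_sum[OF p u] ket_bra_index[OF p i j] by simp
  finally show "(ket_bra \<psi> * ket_bra \<psi>) $$ (i,j) = ket_bra \<psi> $$ (i,j)" .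
qed (auto)

lemma ket_bra_trace: assumes p: "\<psi> \<in> carrier_vec N" and u: "is_unit_vec \<psi>"
  shows "mat_trace (ket_bra \<psi>) = 1"
proof -
  have "mat_trace (ket_bra \<psi>) = (\<Sum>k<N. \<psi> $ k * cnj (\<psi> $ k))"
    unfolding mat_trace_def using ket_bra_carrier[OF p]
    by (auto simp: ket_bra_index[OF p] intro!: sum.cong)
  then show ?thesis using unit_sum[OF p u] by simp
qed

lemma vn_entropy_udu: assumes U: "unitary n U"
  shows "vn_entropy (udu n U (\<lambda>k. complex_of_real (d k)))
    = - (\<Sum>k<n. (if d k = 0 then 0 else d k * log 2 (d k)))"
  unfolding vn_entropy_def eigvals_udu'[OF U] sum_mset_upt by (simp cong: if_cong)



lemma cmod_diff_const: "cmod (complex_of_real x - 1 / of_nat n) = \<bar>x - 1 / real n\<bar>"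
proof -
  have "(1 / of_nat n :: complex) = complex_of_real (1 / real n)" by simp
  then show ?thesis by (metis norm_of_real of_real_diff)
qed

lemma hterm: fixes x mu :: real assumes "mu = 0 \<or> mu = 1"
  shows "(if x * mu = 0 then 0 else x * mu * log 2 (x * mu)) = mu * (if x = 0 then 0 else x * log 2 x)"
  using assms by auto

lemma term_bound: fixes l mu x :: real assumes "mu = 0 \<or> mu = 1"
  shows "\<bar>l * mu - 1 / (x * x)\<bar> \<le> mu * \<bar>l - 1 / x\<bar> + \<bar>mu / x - 1 / (x * x)\<bar>"
  using assms
proof
  assume "mu = 1"
  then show ?thesis using abs_triangle_ineq[of "l - 1/x" "1/x - 1/(x*x)"] by simp
qed simp

lemma term_mu: fixes mu x :: real assumes "mu = 0 \<or> mu = 1" and x: "x \<ge> 2"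
  shows "\<bar>mu / x - 1 / (x * x)\<bar> = mu * (1 / x - 2 / (x * x)) + 1 / (x * x)"
proof (cases "mu = 1")
  case m: True
  have "1 / (x * x) \<le> 1 / x" using x by (simp add: divide_simps)
  then show ?thesis using m by (simp add: field_simps)
next
  case False
  then have "mu = 0" using assms(1) by simp
  then show ?thesis by simp
qed

lemma entropy_nonneg: fixes l :: "nat \<Rightarrow> real"
  assumes "\<And>k. k < n \<Longrightarrow> 0 \<le> l k \<and> l k \<le> 1"
  shows "0 \<le> - (\<Sum>k<n. (if l k = 0 then 0 else l k * log 2 (l k)))"
proof -
  have "(if l k = 0 then 0 else l k * log 2 (l k)) \<le> 0" if k: "k < n" for k
  proof (cases "l k = 0")
    case False
    with assms[OF k] have "0 < l k" "l k \<le> 1" by auto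
    then have "log 2 (l k) \<le> 0" by simp
    then show ?thesis using \<open>0 < l k\<close> False by (simp add: mult_nonneg_nonpos)
  qed simp
  then have "(\<Sum>k<n. (if l k = 0 then 0 else l k * log 2 (l k))) \<le> 0" by (intro sum_nonpos) auto
  then show ?thesis by simp
qed

theorem mainTheorem7:
  fixes N :: nat and \<rho> :: "complex mat" and \<psi> :: "complex vec"
  assumes "N \<ge> 2"
    and "density_mat N \<rho>"
    and "\<psi> \<in> carrier_vec N"
    and "is_unit_vec \<psi>"
  shows "qscm (kron \<rho> (ket_bra \<psi>))
    \<le> vn_entropy \<rho> / (2 * log 2 (real N))
       * (trace_dist \<rho> (max_mixed N) + (real N - 1) / real N)"
proof -
  note N2 = assms(1) and p = assms(3) and u = assms(4)
  have rc: "\<rho> \<in> carrier_mat N N" and psd: "psd_mat \<rho>" and tr: "mat_trace \<rho> = 1"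
    using assms(2) unfolding density_mat_def by auto
  have hr: "adj \<rho> = \<rho>" using psd unfolding psd_mat_def hermitian_mat_def by auto
  obtain U l where U: "unitary N U" and rho: "\<rho> = udu N U (\<lambda>k. complex_of_real (l k))"
    using hermitian_decomp[OF rc hr] unfolding udu_def by blast
  have Uc: "U \<in> carrier_mat N N" using U unitary_carrier by auto
  have l0: "l k \<ge> 0" if "k < N" for k using psd_udu[OF U _ that, of "\<lambda>k. complex_of_real (l k)"] psd unfolding rho by simp
  have "complex_of_real (\<Sum>k<N. l k) = 1" using tr unfolding rho trace_udu[OF U] by simp
  then have lsum: "(\<Sum>k<N. l k) = 1" by (metis of_real_eq_1_iff)
  have l1: "l k \<le> 1" if k: "k < N" for k
  proof -
    have "l k \<le> (\<Sum>k<N. l k)" using k l0 by (intro member_le_sum) auto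
    then show ?thesis using lsum by simp
  qed
  define P where "P = ket_bra \<psi>"
  have Pc: "P \<in> carrier_mat N N" unfolding P_def using ket_bra_carrier[OF p] .
  obtain V mu where V: "unitary N V" and Pe: "P = udu N V (\<lambda>k. complex_of_real (mu k))"
    using hermitian_decomp[OF Pc] ket_bra_adj[OF p] unfolding udu_def P_def by blast
  have "udu N V (\<lambda>k. complex_of_real (mu k) * complex_of_real (mu k)) = udu N V (\<lambda>k. complex_of_real (mu k))"
    using ket_bra_idem[OF p u] unfolding P_def[symmetric] Pe udu_mult[OF V] .
  then have "complex_of_real (mu k) * complex_of_real (mu k) = complex_of_real (mu k)" if "k < N" for k
    using udu_inj[OF V _ that] by blast
  then have mu01: "mu k = 0 \<or> mu k = 1" if "k < N" for k
    using that by (metis mult_cancel_right1 mult_zero_right of_real_eq_1_iff of_real_eq_0_iff)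
  have "complex_of_real (\<Sum>k<N. mu k) = 1"
    using ket_bra_trace[OF p u] unfolding P_def[symmetric] Pe trace_udu[OF V] by simp
  then have musum: "(\<Sum>k<N. mu k) = 1" by (metis of_real_eq_1_iff)
  define W where "W = kron U V"
  have W: "unitary (N*N) W" unfolding W_def by (rule unitary_kron[OF U V])
  have Wc: "W \<in> carrier_mat (N*N) (N*N)" using W unitary_carrier by auto
  define g where "g = (\<lambda>k. l (k div N) * mu (k mod N))"
  have sig: "kron \<rho> (ket_bra \<psi>) = udu (N*N) W (\<lambda>k. complex_of_real (g k))"
    unfolding rho P_def[symmetric] Pe kron_udu[OF U V] W_def g_def by simp
  have dimsig: "dim_row (kron \<rho> (ket_bra \<psi>)) = N * N" unfolding sig using udu_dim[OF Wc] by simp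
  define h where "h = (\<lambda>x::real. if x = 0 then 0 else x * log 2 x)"
  have Srho: "vn_entropy \<rho> = - (\<Sum>a<N. h (l a))"
    unfolding rho vn_entropy_udu[OF U] h_def ..
  have "vn_entropy (kron \<rho> (ket_bra \<psi>)) = - (\<Sum>k<N*N. h (g k))"
    unfolding sig vn_entropy_udu[OF W] h_def ..
  also have "(\<Sum>k<N*N. h (g k)) = (\<Sum>a<N. \<Sum>b<N. h (l a * mu b))"
    unfolding sum_split_nat g_def by (intro sum.cong refl) (simp add: dm_simps)
  also have "\<dots> = (\<Sum>a<N. \<Sum>b<N. mu b * h (l a))"
    unfolding h_def by (intro sum.cong refl) (use mu01 hterm in auto)
  also have "\<dots> = (\<Sum>a<N. h (l a))" by (simp add: sum_distrib_right[symmetric] musum mult.commute)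
  finally have Ssig: "vn_entropy (kron \<rho> (ket_bra \<psi>)) = vn_entropy \<rho>" unfolding Srho by simp
  have S0: "0 \<le> vn_entropy \<rho>" unfolding Srho h_def by (rule entropy_nonneg) (use l0 l1 in auto)
  have Trho: "trace_dist \<rho> (max_mixed N) = (\<Sum>a<N. \<bar>l a - 1 / real N\<bar>) / 2"
    unfolding trace_dist_def max_mixed_def rho udu_minus_const[OF U] trace_norm_udu[OF U]
    by (simp add: cmod_diff_const)
  have "trace_dist (kron \<rho> (ket_bra \<psi>)) (max_mixed (N*N)) = (\<Sum>k<N*N. \<bar>g k - 1 / real (N*N)\<bar>) / 2"
    unfolding trace_dist_def max_mixed_def sig udu_minus_const[OF W] trace_norm_udu[OF W]
    by (simp only: cmod_diff_const)
  also have "(\<Sum>k<N*N. \<bar>g k - 1 / real (N*N)\<bar>) = (\<Sum>a<N. \<Sum>b<N. \<bar>l a * mu b - 1 / (real N * real N)\<bar>)"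
    unfolding sum_split_nat g_def by (intro sum.cong refl) (simp add: dm_simps)
  also have "\<dots> \<le> (\<Sum>a<N. \<Sum>b<N. mu b * \<bar>l a - 1 / real N\<bar> + \<bar>mu b / real N - 1 / (real N * real N)\<bar>)"
    by (intro sum_mono) (use term_bound mu01 in auto)
  also have "\<dots> = (\<Sum>a<N. \<bar>l a - 1 / real N\<bar>) + real N * (\<Sum>b<N. \<bar>mu b / real N - 1 / (real N * real N)\<bar>)"
    by (simp add: sum.distrib sum_distrib_right[symmetric] sum_distrib_left[symmetric] musum mult.commute)
  also have "(\<Sum>b<N. \<bar>mu b / real N - 1 / (real N * real N)\<bar>)
      = (\<Sum>b<N. mu b * (1 / real N - 2 / (real N * real N)) + 1 / (real N * real N))"
    using N2 by (intro sum.cong refl) (use term_mu mu01 in auto)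
  also have "\<dots> = (\<Sum>b<N. mu b) * (1 / real N - 2 / (real N * real N)) + real N * (1 / (real N * real N))"
    by (simp add: sum.distrib sum_distrib_right)
  also have "\<dots> = 2 / real N - 2 / (real N * real N)"
    unfolding musum using N2 by (simp add: field_simps)
  finally have Tsig: "trace_dist (kron \<rho> (ket_bra \<psi>)) (max_mixed (N*N))
      \<le> ((\<Sum>a<N. \<bar>l a - 1 / real N\<bar>) + real N * (2 / real N - 2 / (real N * real N))) / 2"
    by (simp add: divide_right_mono)
  have "real N * (2 / real N - 2 / (real N * real N)) = 2 * ((real N - 1) / real N)"
    using N2 by (simp add: field_simps)
  note e = this
  have Tsig': "trace_dist (kron \<rho> (ket_bra \<psi>)) (max_mixed (N*N))
      \<le> trace_dist \<rho> (max_mixed N) + (real N - 1) / real N"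
  proof -
    define q where "q = (real N - 1) / real N"
    define S where "S = (\<Sum>a<N. \<bar>l a - 1 / real N\<bar>)"
    have "trace_dist (kron \<rho> (ket_bra \<psi>)) (max_mixed (N*N)) \<le> (S + 2 * q) / 2"
      using Tsig unfolding e q_def S_def .
    moreover have "(S + 2 * q) / 2 = S / 2 + q" by (simp add: add_divide_distrib)
    ultimately show ?thesis unfolding Trho q_def[symmetric] S_def[symmetric] by simp
  qed
  have L: "log 2 (real (N * N)) = 2 * log 2 (real N)"
    using N2 by (simp add: log_mult)
  have Lpos: "log 2 (real N) > 0" using N2 by simp
  have "qscm (kron \<rho> (ket_bra \<psi>)) = vn_entropy \<rho> / (2 * log 2 (real N))
      * trace_dist (kron \<rho> (ket_bra \<psi>)) (max_mixed (N*N))"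
    unfolding qscm_def Let_def dimsig Ssig L by simp
  also have "\<dots> \<le> vn_entropy \<rho> / (2 * log 2 (real N)) * (trace_dist \<rho> (max_mixed N) + (real N - 1) / real N)"
    using S0 Lpos Tsig' by (intro mult_left_mono) auto
  finally show ?thesis .
qed


end
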